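(* The set $S\setminus\widehat{c}$ is strongly $\mathfrak{c}$-algebrable in the algebra $\ell^\infty$ (with pointwise operations).
   Context: $\ell^\infty$ is the algebra of bounded real sequences with coordinatewise operations. A Banach limit is a linear functional $L\colon\ell^\infty\to\mathbb R$ such that for every $(x_n)\in\ell^\infty$: (1) if $x_n\ge0$ for all $n$ then $L((x_n))\ge0$; (2) $L((x_2,x_3,\dots))=L((x_1,x_2,\dots))$; (3) $L((1,1,\dots))=1$. $\widehat{c}$ is the set of $x\in\ell^\infty$ for which there is $s\in\mathbb R$ with $L(x)=s$ for every Banach limit $L$. $S=\{x\in\ell^\infty\colon\lim_n\frac{x_1+\dots+x_n}{n}\text{ exists}\}$. A subset $A$ of a commutative algebra $\mathcal L$ is strongly $\kappa$-algebrable if $A\cup\{0\}$ contains a $\kappa$-generated subalgebra (minimal number of generators of cardinality $\kappa$) which is isomorphic to a free algebra; equivalently, there is a set $Z\subset\mathcal L$ of cardinality $\kappa$ such that for every $n$, every non-zero polynomial $P$ in $n$ variables without constant term and all distinct $z_1,\dots,z_n\in Z$, $P(z_1,\dots,z_n)\in A\setminus\{0\}$. $\mathfrak c$ is the cardinality of the continuum. *)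

theory Defs
  imports "HOL-Analysis.Analysis" "HOL-Library.Equipollence"
begin

text \<open>ell-infinity: bounded real sequences (indexed from 0 instead of 1).\<close>
definition linf :: "(nat \<Rightarrow> real) set" where
  "linf = {x. Bseq x}"

text \<open>Banach limit: a linear functional on linf (values outside linf are irrelevant),
positive, shift invariant, and normalised.\<close>
definition banach_limit :: "((nat \<Rightarrow> real) \<Rightarrow> real) \<Rightarrow> bool" where
  "banach_limit L \<longleftrightarrow>
     (\<forall>x\<in>linf. \<forall>y\<in>linf. L (\<lambda>n. x n + y n) = L x + L y) \<and>
     (\<forall>x\<in>linf. \<forall>c::real. L (\<lambda>n. c * x n) = c * L x) \<and>
     (\<forall>x\<in>linf. (\<forall>n. x n \<ge> 0) \<longrightarrow> L x \<ge> 0) \<and>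
     (\<forall>x\<in>linf. L (\<lambda>n. x (Suc n)) = L x) \<and>
     L (\<lambda>n. 1) = 1"

definition c_hat :: "(nat \<Rightarrow> real) set" where
  "c_hat = {x\<in>linf. \<exists>s. \<forall>L. banach_limit L \<longrightarrow> L x = s}"

text \<open>S: Cesaro summable bounded sequences; (x_1+...+x_n)/n with 0-based indexing.\<close>
definition cesaro_S :: "(nat \<Rightarrow> real) set" where
  "cesaro_S = {x\<in>linf. convergent (\<lambda>n. (\<Sum>i<Suc n. x i) / real (Suc n))}"

text \<open>A polynomial in n variables (variables indexed 0..n-1) with real coefficients is
given by a finitely supported coefficient function c on exponent vectors
alpha :: nat \<Rightarrow> nat.\<close>
definition nonconst_poly :: "nat \<Rightarrow> ((nat \<Rightarrow> nat) \<Rightarrow> real) \<Rightarrow> bool" where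
  "nonconst_poly n c \<longleftrightarrow>
     finite {\<alpha>. c \<alpha> \<noteq> 0} \<and>
     (\<forall>\<alpha>. c \<alpha> \<noteq> 0 \<longrightarrow> (\<forall>i\<ge>n. \<alpha> i = 0)) \<and>
     c (\<lambda>_. 0) = 0 \<and>
     (\<exists>\<alpha>. c \<alpha> \<noteq> 0)"

definition poly_eval :: "nat \<Rightarrow> ((nat \<Rightarrow> nat) \<Rightarrow> real) \<Rightarrow> (nat \<Rightarrow> nat \<Rightarrow> real) \<Rightarrow> nat \<Rightarrow> real" where
  "poly_eval n c z = (\<lambda>k. \<Sum>\<alpha>\<in>{\<alpha>. c \<alpha> \<noteq> 0}. c \<alpha> * (\<Prod>i<n. (z i k) ^ (\<alpha> i)))"

text \<open>Strong kappa-algebrability in linf, kappa given by an equipollent set K.\<close>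
definition strongly_algebrable :: "'k set \<Rightarrow> (nat \<Rightarrow> real) set \<Rightarrow> bool" where
  "strongly_algebrable K A \<longleftrightarrow>
     (\<exists>Z. Z \<subseteq> linf \<and> Z \<approx> K \<and>
        (\<forall>n c z. nonconst_poly n c \<and> inj_on z {..<n} \<and> z ` {..<n} \<subseteq> Z \<longrightarrow>
           poly_eval n c z \<in> A - {\<lambda>_. 0}))"

end

theory Submission
  imports Defs "HOL-Computational_Algebra.Polynomial" "HOL-Real_Asymp.Real_Asymp"
begin

definition isfilt :: "nat set set \<Rightarrow> bool" where
  "isfilt M \<longleftrightarrow> (\<forall>X\<in>M. \<forall>Y. X \<subseteq> Y \<longrightarrow> Y \<in> M) \<and> (\<forall>X\<in>M. \<forall>Y\<in>M. X \<inter> Y \<in> M)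
     \<and> {} \<notin> M \<and> (\<forall>X. finite (- X) \<longrightarrow> X \<in> M)"

lemma isfiltD:
  assumes "isfilt M"
  shows isfilt_up: "X \<in> M \<Longrightarrow> X \<subseteq> Y \<Longrightarrow> Y \<in> M"
    and isfilt_int: "X \<in> M \<Longrightarrow> Y \<in> M \<Longrightarrow> X \<inter> Y \<in> M"
    and isfilt_empty: "{} \<notin> M"
    and isfilt_cof: "finite (- X) \<Longrightarrow> X \<in> M"
  using assms unfolding isfilt_def by blast+

lemma isfiltI:
  assumes "\<And>X Y. X \<in> M \<Longrightarrow> X \<subseteq> Y \<Longrightarrow> Y \<in> M"
    and "\<And>X Y. X \<in> M \<Longrightarrow> Y \<in> M \<Longrightarrow> X \<inter> Y \<in> M"
    and "{} \<notin> M"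
    and "\<And>X. finite (- X) \<Longrightarrow> X \<in> M"
  shows "isfilt M"
  using assms unfolding isfilt_def by blast

lemma exists_ultra: "\<exists>M. isfilt M \<and> (\<forall>X. X \<in> M \<or> - X \<in> M)"
proof -
  let ?A = "{M. isfilt M}"
  have cof: "isfilt {X. finite (- X)}"
  proof (rule isfiltI)
    fix X Y :: "nat set" assume "X \<in> {X. finite (- X)}" "X \<subseteq> Y"
    then show "Y \<in> {X. finite (- X)}" by (simp add: finite_subset[of "- Y" "- X"])
  next
    fix X Y :: "nat set" assume "X \<in> {X. finite (- X)}" "Y \<in> {X. finite (- X)}"
    then show "X \<inter> Y \<in> {X. finite (- X)}" by simp
  qed auto
  have "\<forall>C\<in>chains ?A. \<exists>U\<in>?A. \<forall>X\<in>C. X \<subseteq> U"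
  proof
    fix C assume C: "C \<in> chains ?A"
    show "\<exists>U\<in>?A. \<forall>X\<in>C. X \<subseteq> U"
    proof (cases "C = {}")
      case True then show ?thesis using cof by blast
    next
      case False
      then obtain F0 where F0: "F0 \<in> C" by blast
      have ch: "\<And>X Y. X \<in> C \<Longrightarrow> Y \<in> C \<Longrightarrow> X \<subseteq> Y \<or> Y \<subseteq> X"
        using C unfolding chains_def chain_subset_def by blast
      have fC: "\<And>X. X \<in> C \<Longrightarrow> isfilt X" using C unfolding chains_def by blast
      have "isfilt (\<Union>C)"
      proof (rule isfiltI)
        fix X Y assume "X \<in> \<Union>C" "X \<subseteq> Y"
        then obtain F where "F \<in> C" "X \<in> F" by blast
        then have "Y \<in> F" using isfilt_up[OF fC] \<open>X \<subseteq> Y\<close> by metis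
        then show "Y \<in> \<Union>C" using \<open>F \<in> C\<close> by blast
      next
        fix X Y assume X: "X \<in> \<Union>C" and Y: "Y \<in> \<Union>C"
        then obtain F G where F: "F \<in> C" "X \<in> F" and G: "G \<in> C" "Y \<in> G" by blast
        show "X \<inter> Y \<in> \<Union>C"
        proof (cases "F \<subseteq> G")
          case True
          then have "X \<inter> Y \<in> G" using F G isfilt_int[OF fC[OF G(1)]] by blast
          then show ?thesis using G by blast
        next
          case False then have "G \<subseteq> F" using ch F G by blast
          then have "X \<inter> Y \<in> F" using F G isfilt_int[OF fC[OF F(1)]] by blast
          then show ?thesis using F by blast
        qed
      next
        show "{} \<notin> \<Union>C" using fC isfilt_empty by blast
      next
        fix X :: "nat set" assume "finite (- X)"
        then have "X \<in> F0" using isfilt_cof[OF fC[OF F0]] by blast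
        then show "X \<in> \<Union>C" using F0 by blast
      qed
      then show ?thesis by blast
    qed
  qed
  from Zorn_Lemma2[OF this] obtain M where M: "isfilt M" and max: "\<And>X. isfilt X \<Longrightarrow> M \<subseteq> X \<Longrightarrow> X = M"
    by blast
  have "X \<in> M \<or> - X \<in> M" for X
  proof (cases "\<exists>W\<in>M. W \<inter> X = {}")
    case True
    then obtain W where "W \<in> M" "W \<subseteq> - X" by blast
    then show ?thesis using isfilt_up[OF M] by blast
  next
    case False
    let ?M = "{Y. \<exists>W\<in>M. W \<inter> X \<subseteq> Y}"
    have "isfilt ?M"
    proof (rule isfiltI)
      fix A B assume "A \<in> ?M" "A \<subseteq> B" then show "B \<in> ?M" by blast
    next
      fix A B assume "A \<in> ?M" "B \<in> ?M"
      then obtain W1 W2 where W: "W1 \<in> M" "W1 \<inter> X \<subseteq> A" "W2 \<in> M" "W2 \<inter> X \<subseteq> B" by blast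
      then have "W1 \<inter> W2 \<in> M" using isfilt_int[OF M] by blast
      then show "A \<inter> B \<in> ?M" using W by blast
    next
      show "{} \<notin> ?M" using False by blast
    next
      fix A :: "nat set" assume "finite (- A)" then have "A \<in> M" using isfilt_cof[OF M] by blast
      then show "A \<in> ?M" by blast
    qed
    moreover have "M \<subseteq> ?M" by blast
    ultimately have "?M = M" using max by blast
    moreover have "UNIV \<in> M" using isfilt_cof[OF M] by simp
    then have "X \<in> ?M" by blast
    ultimately show ?thesis by simp
  qed
  then show ?thesis using M by blast
qed

lemma exists_ultra_filter:
  "\<exists>U::nat filter. U \<noteq> bot \<and> U \<le> sequentially \<and> (\<forall>P. eventually P U \<or> eventually (\<lambda>x. \<not> P x) U)"
proof -
  obtain M where M: "isfilt M" and ul: "\<And>X. X \<in> M \<or> - X \<in> M" using exists_ultra by blast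
  have isf: "is_filter (\<lambda>P. {x. P x} \<in> M)"
  proof
    show "{x. True} \<in> M" using isfilt_cof[OF M] by simp
  next
    fix P Q assume "{x. P x} \<in> M" "{x. Q x} \<in> M"
    then have "{x. P x} \<inter> {x. Q x} \<in> M" using isfilt_int[OF M] by blast
    then show "{x. P x \<and> Q x} \<in> M" by (simp add: Collect_conj_eq)
  next
    fix P Q assume "\<forall>x. P x \<longrightarrow> Q x" "{x. P x} \<in> M"
    moreover have "{x. P x} \<subseteq> {x. Q x}" using calculation by blast
    ultimately show "{x. Q x} \<in> M" using isfilt_up[OF M] by blast
  qed
  define U where "U = Abs_filter (\<lambda>P. {x. P x} \<in> M)"
  have ev: "eventually P U \<longleftrightarrow> {x. P x} \<in> M" for P
    unfolding U_def using eventually_Abs_filter[OF isf] by simp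
  have "U \<noteq> bot"
    using ev[of "\<lambda>x. False"] isfilt_empty[OF M] by (simp add: eventually_False[symmetric])
  moreover have "U \<le> sequentially"
  proof (rule filter_leI)
    fix P assume "eventually P sequentially"
    then obtain N where N: "\<And>n. n \<ge> N \<Longrightarrow> P n" by (auto simp: eventually_sequentially)
    have "- {x. P x} \<subseteq> {..<N}" using N by (auto simp: not_less[symmetric])
    then have "finite (- {x. P x})" using finite_subset by blast
    then show "eventually P U" using isfilt_cof[OF M] ev by blast
  qed
  moreover have "eventually P U \<or> eventually (\<lambda>x. \<not> P x) U" for P
    using ul[of "{x. P x}"] by (simp add: ev Collect_neg_eq)
  ultimately show ?thesis by blast
qed


lemma ultra_lim:
  fixes f :: "nat \<Rightarrow> real"
  assumes U: "U \<noteq> bot" "\<And>P. eventually P U \<or> eventually (\<lambda>x. \<not> P x) U"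
    and B: "\<And>k. \<bar>f k\<bar> \<le> B"
  shows "\<exists>l. (f \<longlongrightarrow> l) U"
proof -
  let ?F = "filtermap f U"
  have "?F \<noteq> bot" using U(1) by (simp add: filtermap_bot_iff)
  moreover have "eventually (\<lambda>x. x \<in> cball 0 B) ?F"
    using B by (simp add: eventually_filtermap dist_real_def)
  ultimately obtain l where l: "inf (nhds l) ?F \<noteq> bot"
    using compact_cball[of "0::real" B] unfolding compact_filter by blast
  have "?F \<le> nhds l"
  proof (rule filter_leI)
    fix P assume P: "eventually P (nhds l)"
    show "eventually P ?F"
    proof (rule ccontr)
      assume "\<not> eventually P ?F"
      then have "eventually (\<lambda>x. \<not> P x) ?F"
        using U(2)[of "\<lambda>k. P (f k)"] by (simp add: eventually_filtermap)
      then have "eventually (\<lambda>x. P x \<and> \<not> P x) (inf (nhds l) ?F)"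
        using P eventually_inf by blast
      then show False using l by (simp add: eventually_False)
    qed
  qed
  then show ?thesis unfolding filterlim_def by blast
qed

lemma banach_from_windows:
  fixes x :: "nat \<Rightarrow> real" and a m :: "nat \<Rightarrow> nat"
  assumes xb: "Bseq x" and mpos: "\<And>k. m k > 0" and minf: "filterlim m at_top sequentially"
    and conv: "(\<lambda>k. (\<Sum>i<m k. x (a k + i)) / real (m k)) \<longlonglongrightarrow> v"
  shows "\<exists>L. banach_limit L \<and> L x = v"
proof -
  obtain U :: "nat filter" where U: "U \<noteq> bot" "U \<le> sequentially"
    "\<And>P. eventually P U \<or> eventually (\<lambda>x. \<not> P x) U"
    using exists_ultra_filter by blast
  define avg where "avg y k = (\<Sum>i<m k. y (a k + i)) / real (m k)" for y :: "nat \<Rightarrow> real" and k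
  define L where "L y = Lim U (avg y)" for y
  have ntriv: "\<not> trivial_limit U" using U(1) by (simp add: trivial_limit_def)
  have avgb: "\<bar>avg y k\<bar> \<le> K" if "\<And>n. \<bar>y n\<bar> \<le> K" for y K k
  proof -
    have "\<bar>\<Sum>i<m k. y (a k + i)\<bar> \<le> (\<Sum>i<m k. \<bar>y (a k + i)\<bar>)" by (rule sum_abs)
    also have "\<dots> \<le> (\<Sum>i<m k. K)" by (rule sum_mono) (use that in auto)
    also have "\<dots> = real (m k) * K" by simp
    finally show ?thesis using mpos[of k] unfolding avg_def
      by (simp add: abs_divide divide_le_eq mult.commute)
  qed
  have bnd: "\<exists>K. \<forall>n. \<bar>y n\<bar> \<le> K" if "y \<in> linf" for y
    using that unfolding linf_def Bseq_def by (auto simp: real_norm_def)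
  have lim: "(avg y \<longlongrightarrow> L y) U" if yl: "y \<in> linf" for y
  proof -
    obtain K where "\<forall>n. \<bar>y n\<bar> \<le> K" using bnd[OF yl] by blast
    then obtain l where l: "(avg y \<longlongrightarrow> l) U" using ultra_lim[OF U(1) U(3), of "avg y" K] avgb by blast
    then have "L y = l" unfolding L_def using tendsto_Lim[OF ntriv] by blast
    then show ?thesis using l by simp
  qed
  have Leq: "L y = l" if "(avg y \<longlongrightarrow> l) U" for y l
    unfolding L_def using tendsto_Lim[OF ntriv that] .
  have "banach_limit L"
    unfolding banach_limit_def
  proof (intro conjI ballI allI impI)
    fix x y assume x: "x \<in> linf" and y: "y \<in> linf"
    have "avg (\<lambda>n. x n + y n) = (\<lambda>k. avg x k + avg y k)"
      unfolding avg_def by (auto simp: sum.distrib add_divide_distrib)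
    then have "(avg (\<lambda>n. x n + y n) \<longlongrightarrow> L x + L y) U"
      using tendsto_add[OF lim[OF x] lim[OF y]] by simp
    then show "L (\<lambda>n. x n + y n) = L x + L y" by (rule Leq)
  next
    fix x c assume x: "x \<in> linf"
    have "avg (\<lambda>n. c * x n) = (\<lambda>k. c * avg x k)"
      unfolding avg_def by (auto simp: sum_distrib_left)
    then have "(avg (\<lambda>n. c * x n) \<longlongrightarrow> c * L x) U"
      using tendsto_mult_left[OF lim[OF x]] by simp
    then show "L (\<lambda>n. c * x n) = c * L x" by (rule Leq)
  next
    fix x assume x: "x \<in> linf" and pos: "\<forall>n. 0 \<le> x n"
    have "\<forall>k. 0 \<le> avg x k" unfolding avg_def using pos by (auto intro!: divide_nonneg_nonneg sum_nonneg)
    then show "0 \<le> L x"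
      using tendsto_lowerbound[OF lim[OF x], of 0] U(1) by (simp add: always_eventually)
  next
    fix x assume x: "x \<in> linf"
    obtain K where K: "\<forall>n. \<bar>x n\<bar> \<le> K" using bnd[OF x] by blast
    have d: "avg (\<lambda>n. x (Suc n)) k - avg x k = (x (a k + m k) - x (a k)) / real (m k)" for k
    proof -
      have "(\<Sum>i<m k. x (a k + Suc i)) - (\<Sum>i<m k. x (a k + i)) = (\<Sum>i<m k. x (a k + Suc i) - x (a k + i))"
        by (simp add: sum_subtractf)
      also have "\<dots> = x (a k + m k) - x (a k + 0)"
        by (rule sum_lessThan_telescope)
      finally show ?thesis unfolding avg_def by (simp add: diff_divide_distrib[symmetric])
    qed
    have "((\<lambda>k. (x (a k + m k) - x (a k)) / real (m k)) \<longlongrightarrow> 0) sequentially"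
    proof (rule Lim_null_comparison)
      have "\<bar>x (a k + m k) - x (a k)\<bar> \<le> 2 * K" for k
        using K[rule_format, of "a k + m k"] K[rule_format, of "a k"] by linarith
      then have "norm ((x (a k + m k) - x (a k)) / real (m k)) \<le> 2 * K / real (m k)" for k
        by (simp add: abs_divide divide_right_mono)
      then show "\<forall>\<^sub>F k in sequentially. norm ((x (a k + m k) - x (a k)) / real (m k)) \<le> 2 * K / real (m k)"
        by (simp add: always_eventually)
      have "filterlim (\<lambda>k. real (m k)) at_top sequentially"
        using filterlim_compose[OF filterlim_real_sequentially minf] by (simp add: o_def)
      then have "filterlim (\<lambda>k. real (m k)) at_infinity sequentially"
        by (rule filterlim_at_top_imp_at_infinity)
      then show "((\<lambda>k. 2 * K / real (m k)) \<longlongrightarrow> 0) sequentially"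
        by (rule tendsto_divide_0[OF tendsto_const])
    qed
    then have "((\<lambda>k. avg (\<lambda>n. x (Suc n)) k - avg x k) \<longlongrightarrow> 0) U"
      using tendsto_mono[OF U(2)] d by simp
    from tendsto_add[OF this lim[OF x]]
    have "(avg (\<lambda>n. x (Suc n)) \<longlongrightarrow> L x) U" by simp
    then show "L (\<lambda>n. x (Suc n)) = L x" by (rule Leq)
  next
    have "avg (\<lambda>n. 1) = (\<lambda>k. 1)" unfolding avg_def using mpos by (auto intro!: ext)
    then show "L (\<lambda>n. 1) = 1" using Leq[of "\<lambda>n. 1" 1] by simp
  qed
  moreover have "L x = v"
    using Leq[of x v] tendsto_mono[OF U(2) conv] unfolding avg_def by simp
  ultimately show ?thesis by blast
qed


lemma digits_inj:
  fixes D :: nat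
  assumes "\<forall>i<n. \<alpha> i < D" "\<forall>i<n. \<beta> i < D"
    and "(\<Sum>i<n. \<alpha> i * D ^ i) = (\<Sum>i<n. \<beta> i * D ^ i)"
  shows "\<forall>i<n. \<alpha> i = \<beta> i"
  using assms
proof (induction n arbitrary: \<alpha> \<beta>)
  case 0 then show ?case by simp
next
  case (Suc n)
  have split: "(\<Sum>i<Suc n. f i * D ^ i) = f 0 + D * (\<Sum>i<n. f (Suc i) * D ^ i)" for f :: "nat \<Rightarrow> nat"
    unfolding sum.lessThan_Suc_shift by (simp add: sum_distrib_left algebra_simps)
  have D: "D > 0" using Suc.prems(1) by auto
  have a0: "\<alpha> 0 < D" "\<beta> 0 < D" using Suc.prems by auto
  have eq: "\<alpha> 0 + D * (\<Sum>i<n. \<alpha> (Suc i) * D ^ i) = \<beta> 0 + D * (\<Sum>i<n. \<beta> (Suc i) * D ^ i)"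
    using Suc.prems(3) unfolding split .
  then have "(\<alpha> 0 + D * (\<Sum>i<n. \<alpha> (Suc i) * D ^ i)) mod D = (\<beta> 0 + D * (\<Sum>i<n. \<beta> (Suc i) * D ^ i)) mod D"
    by simp
  then have e0: "\<alpha> 0 = \<beta> 0" using a0 by (simp only: mod_mult_self2 mod_less)
  from eq e0 have "D * (\<Sum>i<n. \<alpha> (Suc i) * D ^ i) = D * (\<Sum>i<n. \<beta> (Suc i) * D ^ i)" by simp
  then have "(\<Sum>i<n. \<alpha> (Suc i) * D ^ i) = (\<Sum>i<n. \<beta> (Suc i) * D ^ i)" using D by simp
  then have "\<forall>i<n. \<alpha> (Suc i) = \<beta> (Suc i)"
  proof -
    have "\<forall>i<n. \<alpha> (Suc i) < D" "\<forall>i<n. \<beta> (Suc i) < D" using Suc.prems(1,2) by auto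
    then show ?thesis using Suc.IH[of "\<lambda>i. \<alpha> (Suc i)" "\<lambda>i. \<beta> (Suc i)"] \<open>(\<Sum>i<n. _) = _\<close> by blast
  qed
  then show ?case using e0 by (auto simp: less_Suc_eq_0_disj)
qed

lemma kronecker:
  assumes "nonconst_poly n c"
  shows "\<exists>s::nat\<Rightarrow>nat. (\<Sum>\<alpha>\<in>{\<alpha>. c \<alpha> \<noteq> 0}. c \<alpha> * (\<Prod>i<n. (1 / (real (s i) + 1)) ^ \<alpha> i)) \<noteq> 0"
proof -
  define F where "F = {\<alpha>. c \<alpha> \<noteq> 0}"
  have finF: "finite F" and supp: "\<And>\<alpha> i. \<alpha> \<in> F \<Longrightarrow> i \<ge> n \<Longrightarrow> \<alpha> i = 0"
    and ne: "F \<noteq> {}"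
    using assms unfolding nonconst_poly_def F_def by auto
  define D where "D = Suc (\<Sum>\<alpha>\<in>F. \<Sum>i<n. \<alpha> i)"
  have lt: "\<alpha> i < D" if "\<alpha> \<in> F" "i < n" for \<alpha> i
  proof -
    have "\<alpha> i \<le> (\<Sum>i<n. \<alpha> i)" using that by (intro member_le_sum) auto
    also have "\<dots> \<le> (\<Sum>\<alpha>\<in>F. \<Sum>i<n. \<alpha> i)"
      using that finF by (intro member_le_sum[where f = "\<lambda>\<alpha>. \<Sum>i<n. \<alpha> i"]) auto
    finally show ?thesis unfolding D_def by simp
  qed
  define \<kappa> where "\<kappa> \<alpha> = (\<Sum>i<n. \<alpha> i * D ^ i)" for \<alpha> :: "nat \<Rightarrow> nat"
  have kinj: "\<alpha> = \<beta>" if "\<alpha> \<in> F" "\<beta> \<in> F" "\<kappa> \<alpha> = \<kappa> \<beta>" for \<alpha> \<beta>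
  proof
    fix i show "\<alpha> i = \<beta> i"
    proof (cases "i < n")
      case True then show ?thesis using digits_inj[of n \<alpha> D \<beta>] lt that unfolding \<kappa>_def by blast
    next
      case False then show ?thesis using supp[OF that(1), of i] supp[OF that(2), of i] by simp
    qed
  qed
  define p :: "real poly" where "p = (\<Sum>\<alpha>\<in>F. monom (c \<alpha>) (\<kappa> \<alpha>))"
  obtain \<alpha>0 where a0: "\<alpha>0 \<in> F" using ne by blast
  have "coeff p (\<kappa> \<alpha>0) = (\<Sum>\<alpha>\<in>F. if \<alpha> = \<alpha>0 then c \<alpha> else 0)"
    unfolding p_def coeff_sum coeff_monom
    by (rule sum.cong) (use kinj a0 in auto)
  also have "\<dots> = c \<alpha>0" using finF a0 by simp
  finally have "p \<noteq> 0" using a0 unfolding F_def by auto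
  then have fin: "finite {x. poly p x = 0}" by (rule poly_roots_finite)
  have "infinite (range (\<lambda>r::nat. 1 / (real r + 1)))"
    by (rule range_inj_infinite) (auto simp: inj_def)
  then obtain r where r: "poly p (1 / (real r + 1)) \<noteq> 0"
  proof -
    have "\<not> range (\<lambda>r::nat. 1 / (real r + 1)) \<subseteq> {x. poly p x = 0}"
      using fin \<open>infinite _\<close> finite_subset by blast
    then show ?thesis using that by blast
  qed
  define x where "x = 1 / (real r + 1)"
  define s where "s i = (r + 1) ^ (D ^ i) - 1" for i
  have sx: "1 / (real (s i) + 1) = x ^ (D ^ i)" for i
  proof -
    have "(r + 1) ^ (D ^ i) \<ge> 1" by simp
    then have "real (s i) + 1 = (real r + 1) ^ (D ^ i)" unfolding s_def
      by (simp add: of_nat_diff add.commute)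
    then show ?thesis unfolding x_def by (simp add: power_one_over)
  qed
  have "(\<Sum>\<alpha>\<in>F. c \<alpha> * (\<Prod>i<n. (1 / (real (s i) + 1)) ^ \<alpha> i)) = poly p x"
    unfolding p_def poly_sum sx
  proof (rule sum.cong[OF refl])
    fix \<alpha> assume "\<alpha> \<in> F"
    have "(\<Prod>i<n. (x ^ (D ^ i)) ^ \<alpha> i) = (\<Prod>i<n. x ^ (\<alpha> i * D ^ i))"
      by (rule prod.cong[OF refl]) (simp add: power_mult[symmetric] mult.commute)
    also have "\<dots> = x ^ \<kappa> \<alpha>" unfolding \<kappa>_def by (simp add: power_sum)
    finally show "c \<alpha> * (\<Prod>i<n. (x ^ (D ^ i)) ^ \<alpha> i) = poly (monom (c \<alpha>) (\<kappa> \<alpha>)) x"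
      by (simp add: poly_monom)
  qed
  then show ?thesis using r unfolding F_def x_def by (intro exI[of _ s]) simp
qed


lemma asym: "((\<lambda>N::nat. (sqrt (sqrt (real (Suc N))) + 2)^2 / real (Suc N)) \<longlongrightarrow> 0) sequentially"
  by real_asymp

definition inblk :: "nat \<Rightarrow> nat \<Rightarrow> bool" where
  "inblk j k \<longleftrightarrow> j ^ 4 \<le> k \<and> k < j ^ 4 + j"

lemma blk_mono: fixes j j' :: nat assumes "j < j'" shows "j ^ 4 + j \<le> j' ^ 4"
proof -
  have "(Suc j) ^ 4 = j^4 + 4*j^3 + 6*j^2 + 4*j + 1" by (simp add: eval_nat_numeral algebra_simps)
  then have "j ^ 4 + j \<le> (Suc j) ^ 4" by simp
  also have "\<dots> \<le> j' ^ 4" using assms by (intro power_mono) auto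
  finally show ?thesis .
qed

lemma inblk_unique: "inblk j k \<Longrightarrow> inblk j' k \<Longrightarrow> j = j'"
  unfolding inblk_def using blk_mono
  by (metis add_lessD1 linorder_neqE_nat not_less order_trans)

definition bj :: "nat \<Rightarrow> nat" where "bj k = (THE j. inblk j k)"

lemma bj_eq: "inblk j k \<Longrightarrow> bj k = j"
  unfolding bj_def using inblk_unique by blast

lemma inblk_pos: "inblk j k \<Longrightarrow> 0 < j"
  unfolding inblk_def by auto

lemma inblk_start: "i < j \<Longrightarrow> inblk j (j ^ 4 + i)"
  unfolding inblk_def by auto

lemma count_blk:
  "card {k. k < N \<and> (\<exists>j. inblk j k)} \<le> (nat \<lceil>sqrt (sqrt (real N))\<rceil> + 1) ^ 2"
proof -
  define S where "S = nat \<lceil>sqrt (sqrt (real N))\<rceil> + 1"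
  define f where "f k = (bj k, k - bj k ^ 4)" for k
  have into: "f ` {k. k < N \<and> (\<exists>j. inblk j k)} \<subseteq> {..<S} \<times> {..<S}"
  proof
    fix p assume "p \<in> f ` {k. k < N \<and> (\<exists>j. inblk j k)}"
    then obtain k j where k: "k < N" "inblk j k" and p: "p = f k" by blast
    have bk: "bj k = j" using bj_eq[OF k(2)] .
    have j4: "j ^ 4 < N" using k unfolding inblk_def by simp
    have e4: "(real j) ^ 4 = ((real j) ^ 2) ^ 2" by (simp flip: power_mult)
    have "real j = sqrt (sqrt ((real j) ^ 4))"
      unfolding e4 real_sqrt_abs by simp
    also have "\<dots> \<le> sqrt (sqrt (real N))"
      using j4 by (intro real_sqrt_le_mono) (simp flip: of_nat_power)
    also have "\<dots> \<le> real (nat \<lceil>sqrt (sqrt (real N))\<rceil>)" by (rule real_nat_ceiling_ge)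
    finally have "j < S" unfolding S_def by linarith
    moreover have "k - j ^ 4 < j" using k unfolding inblk_def by linarith
    ultimately show "p \<in> {..<S} \<times> {..<S}" unfolding p f_def bk by simp
  qed
  have inj: "inj_on f {k. k < N \<and> (\<exists>j. inblk j k)}"
  proof (rule inj_onI)
    fix k k' assume "k \<in> {k. k < N \<and> (\<exists>j. inblk j k)}" "k' \<in> {k. k < N \<and> (\<exists>j. inblk j k)}" "f k = f k'"
    then obtain j j' where "inblk j k" "inblk j' k'" "bj k = bj k'" "k - bj k ^ 4 = k' - bj k' ^ 4"
      unfolding f_def by auto
    then show "k = k'" using bj_eq unfolding inblk_def by (metis le_add_diff_inverse)
  qed
  have "card {k. k < N \<and> (\<exists>j. inblk j k)} \<le> card ({..<S} \<times> {..<S})"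
    by (rule card_inj_on_le[OF inj into]) simp
  then show ?thesis unfolding S_def by (simp add: power2_eq_square)
qed

lemma cesaro_zero:
  fixes y :: "nat \<Rightarrow> real"
  assumes yb: "\<And>k. \<bar>y k\<bar> \<le> C" and y0: "\<And>k. \<not> (\<exists>j. inblk j k) \<Longrightarrow> y k = 0"
  shows "(\<lambda>N. (\<Sum>i<Suc N. y i) / real (Suc N)) \<longlonglongrightarrow> 0"
proof (rule Lim_null_comparison)
  have C0: "C \<ge> 0" using yb[of 0] by linarith
  have "norm ((\<Sum>i<Suc N. y i) / real (Suc N)) \<le> C * (sqrt (sqrt (real (Suc N))) + 2)^2 / real (Suc N)" for N
  proof -
    let ?B = "{k. k < Suc N \<and> (\<exists>j. inblk j k)}"
    have "\<bar>\<Sum>i<Suc N. y i\<bar> \<le> (\<Sum>i<Suc N. \<bar>y i\<bar>)" by (rule sum_abs)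
    also have "\<dots> \<le> (\<Sum>i<Suc N. if (\<exists>j. inblk j i) then C else 0)"
      by (rule sum_mono) (use yb y0 in auto)
    also have "\<dots> = (\<Sum>i\<in>{i\<in>{..<Suc N}. \<exists>j. inblk j i}. C)"
      by (subst sum.inter_filter) auto
    also have "\<dots> = C * real (card ?B)" by (simp add: mult.commute)
    also have "\<dots> \<le> C * (sqrt (sqrt (real (Suc N))) + 2)^2"
    proof (rule mult_left_mono[OF _ C0])
      have "real (card ?B) \<le> real ((nat \<lceil>sqrt (sqrt (real (Suc N)))\<rceil> + 1) ^ 2)"
        using count_blk[of "Suc N"] by linarith
      also have "\<dots> = (real (nat \<lceil>sqrt (sqrt (real (Suc N)))\<rceil>) + 1) ^ 2" by (simp add: add.commute)
      also have "\<dots> \<le> (sqrt (sqrt (real (Suc N))) + 2)^2"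
      proof (rule power_mono)
        have "real (nat \<lceil>sqrt (sqrt (real (Suc N)))\<rceil>) = of_int \<lceil>sqrt (sqrt (real (Suc N)))\<rceil>"
          by simp
        also have "\<dots> \<le> sqrt (sqrt (real (Suc N))) + 1" by (rule of_int_ceiling_le_add_one)
        finally show "real (nat \<lceil>sqrt (sqrt (real (Suc N)))\<rceil>) + 1 \<le> sqrt (sqrt (real (Suc N))) + 2"
          by linarith
      qed (intro add_nonneg_nonneg of_nat_0_le_iff zero_le_one)
      finally show "real (card ?B) \<le> (sqrt (sqrt (real (Suc N))) + 2)^2" .
    qed
    finally show ?thesis by (simp add: abs_divide divide_right_mono)
  qed
  then show "\<forall>\<^sub>F N in sequentially. norm ((\<Sum>i<Suc N. y i) / real (Suc N)) \<le> C * (sqrt (sqrt (real (Suc N))) + 2)^2 / real (Suc N)"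
    by (simp add: always_eventually)
  show "(\<lambda>N. C * (sqrt (sqrt (real (Suc N))) + 2)^2 / real (Suc N)) \<longlonglongrightarrow> 0"
    using tendsto_mult_left[OF asym, of C] by (simp add: mult.assoc)
qed


type_synonym desc = "nat \<times> (int \<times> nat) list"

definition hval :: "real \<Rightarrow> desc \<Rightarrow> real" where
  "hval t d = (case map_of (snd d) \<lfloor>2 ^ fst d * t\<rfloor> of None \<Rightarrow> 0 | Some s \<Rightarrow> 1 / (real s + 1))"

definition zz :: "real \<Rightarrow> nat \<Rightarrow> real" where
  "zz t k = (if \<exists>j. inblk j k then hval t (from_nat (bj k)) else 0)"

lemma hval_bnd: "0 \<le> hval t d \<and> hval t d \<le> 1"
  unfolding hval_def by (auto split: option.split simp: divide_le_eq)

lemma zz_bnd: "0 \<le> zz t k \<and> zz t k \<le> 1"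
  unfolding zz_def using hval_bnd by auto

lemma floor_sep:
  fixes t1 t2 :: real
  assumes "t1 \<noteq> t2"
  shows "eventually (\<lambda>m::nat. \<lfloor>2 ^ m * t1\<rfloor> \<noteq> \<lfloor>2 ^ m * t2\<rfloor>) sequentially"
proof -
  have d: "\<bar>t1 - t2\<bar> > 0" using assms by simp
  obtain M where M: "1 / \<bar>t1 - t2\<bar> < 2 ^ M" using real_arch_pow[of "2::real" "1 / \<bar>t1 - t2\<bar>"] by auto
  have "\<lfloor>2 ^ m * t1\<rfloor> \<noteq> \<lfloor>2 ^ m * t2\<rfloor>" if "m \<ge> M" for m
  proof
    assume eq: "\<lfloor>2 ^ m * t1\<rfloor> = \<lfloor>2 ^ m * t2\<rfloor>"
    have lt1: "\<bar>2 ^ m * t1 - 2 ^ m * t2\<bar> < 1"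
      using floor_correct[of "2 ^ m * t1"] floor_correct[of "2 ^ m * t2"] eq by linarith
    have pw: "(2::real) ^ M \<le> 2 ^ m" using that by (intro power_increasing) auto
    have "1 < 2 ^ M * \<bar>t1 - t2\<bar>" using M d by (simp add: divide_less_eq)
    also have "\<dots> \<le> 2 ^ m * \<bar>t1 - t2\<bar>" using pw by (intro mult_right_mono) auto
    finally have "1 < 2 ^ m * \<bar>t1 - t2\<bar>" .
    then show False using lt1 by (simp add: abs_mult flip: right_diff_distrib)
  qed
  then show ?thesis unfolding eventually_sequentially by blast
qed

lemma good_blocks:
  fixes t :: "nat \<Rightarrow> real" and s :: "nat \<Rightarrow> nat"
  assumes inj: "inj_on t {..<n}"
  shows "infinite {j. \<forall>i<n. hval (t i) (from_nat j) = 1 / (real (s i) + 1)}"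
proof -
  have "\<forall>p\<in>{..<n} \<times> {..<n}. eventually (\<lambda>m::nat. fst p \<noteq> snd p \<longrightarrow> \<lfloor>2 ^ m * t (fst p)\<rfloor> \<noteq> \<lfloor>2 ^ m * t (snd p)\<rfloor>) sequentially"
  proof
    fix p assume p: "p \<in> {..<n} \<times> {..<n}"
    show "eventually (\<lambda>m::nat. fst p \<noteq> snd p \<longrightarrow> \<lfloor>2 ^ m * t (fst p)\<rfloor> \<noteq> \<lfloor>2 ^ m * t (snd p)\<rfloor>) sequentially"
    proof (cases "fst p = snd p")
      case True then show ?thesis by simp
    next
      case False
      then have "t (fst p) \<noteq> t (snd p)" using inj p by (auto dest: inj_onD)
      from floor_sep[OF this] show ?thesis by (rule eventually_mono) simp
    qed
  qed
  from eventually_ball_finite[OF _ this] obtain M where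
    M: "\<And>m. m \<ge> M \<Longrightarrow> \<forall>p\<in>{..<n} \<times> {..<n}. fst p \<noteq> snd p \<longrightarrow> \<lfloor>2 ^ m * t (fst p)\<rfloor> \<noteq> \<lfloor>2 ^ m * t (snd p)\<rfloor>"
    by (auto simp: eventually_sequentially)
  define ps where "ps m = map (\<lambda>i. (\<lfloor>2 ^ m * t i\<rfloor>, s i)) [0..<n]" for m :: nat
  define g where "g m = to_nat ((m, ps m) :: desc)" for m
  have good: "g m \<in> {j. \<forall>i<n. hval (t i) (from_nat j) = 1 / (real (s i) + 1)}" if "m \<ge> M" for m
  proof -
    have injm: "inj_on (\<lambda>i. \<lfloor>2 ^ m * t i\<rfloor>) {0..<n}"
    proof (rule inj_onI)
      fix x y assume xy: "x \<in> {0..<n}" "y \<in> {0..<n}" "\<lfloor>2 ^ m * t x\<rfloor> = \<lfloor>2 ^ m * t y\<rfloor>"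
      show "x = y"
      proof (rule ccontr)
        assume "x \<noteq> y"
        then show False using M[OF that, rule_format, of "(x, y)"] xy by auto
      qed
    qed
    have dist: "distinct (map fst (ps m))"
      unfolding ps_def using injm by (simp add: distinct_map o_def)
    have "map_of (ps m) \<lfloor>2 ^ m * t i\<rfloor> = Some (s i)" if "i < n" for i
      by (rule map_of_is_SomeI[OF dist]) (use that in \<open>auto simp: ps_def\<close>)
    then show ?thesis unfolding g_def hval_def by simp
  qed
  have "inj g"
  proof (rule injI)
    fix m m' assume "g m = g m'"
    then have "((m, ps m) :: desc) = (m', ps m')" unfolding g_def by (rule injD[OF inj_to_nat])
    then show "m = m'" by simp
  qed
  then have ig: "inj_on g {M..}" by (rule inj_on_subset) simp
  have "infinite (g ` {M..})"
  proof
    assume "finite (g ` {M..})"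
    then have "finite {M..}" using finite_imageD[OF _ ig] by blast
    then show False using infinite_Ici by blast
  qed
  moreover have "g ` {M..} \<subseteq> {j. \<forall>i<n. hval (t i) (from_nat j) = 1 / (real (s i) + 1)}"
    using good by auto
  ultimately show ?thesis using finite_subset by blast
qed

lemma zz_inj: "inj zz"
proof (rule injI)
  fix t1 t2 assume eq: "zz t1 = zz t2"
  show "t1 = t2"
  proof (rule ccontr)
    assume ne: "t1 \<noteq> t2"
    define t where "t i = (if i = 0 then t1 else t2)" for i :: nat
    define s :: "nat \<Rightarrow> nat" where "s i = (if i = 0 then 0 else 1)" for i
    have "inj_on t {..<2}"
    proof (rule inj_onI)
      fix x y assume "x \<in> {..<(2::nat)}" "y \<in> {..<(2::nat)}" "t x = t y"
      then show "x = y" using ne unfolding t_def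
        by (cases "x = 0"; cases "y = 0") auto
    qed
    from good_blocks[OF this, of s]
    have "infinite ({j. \<forall>i<2. hval (t i) (from_nat j) = 1 / (real (s i) + 1)} - {0})"
      by (rule infinite_remove)
    then obtain j where j: "j \<noteq> 0" "\<forall>i<2. hval (t i) (from_nat j) = 1 / (real (s i) + 1)"
      using infinite_imp_nonempty by blast
    have ib: "inblk j (j ^ 4)" using inblk_start[of 0 j] j(1) by simp
    have z: "zz u (j ^ 4) = hval u (from_nat j)" for u
      unfolding zz_def bj_eq[OF ib] using ib by auto
    have "hval t1 (from_nat j) = 1" using j(2)[rule_format, of 0] unfolding t_def s_def by simp
    moreover have "hval t2 (from_nat j) = 1 / 2" using j(2)[rule_format, of 1] unfolding t_def s_def by simp
    ultimately have "zz t1 (j ^ 4) \<noteq> zz t2 (j ^ 4)" unfolding z by simp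
    then show False using eq by simp
  qed
qed


theorem theorem3p4:
  shows "strongly_algebrable (UNIV :: real set) (cesaro_S - c_hat)"
  unfolding strongly_algebrable_def
proof (intro exI conjI allI impI)
  show "range zz \<subseteq> linf"
  proof
    fix x assume "x \<in> range zz"
    then obtain u where x: "x = zz u" by blast
    have "Bseq (zz u)" by (rule BseqI'[of _ 1]) (use zz_bnd in auto)
    then show "x \<in> linf" unfolding linf_def x by simp
  qed
  have "bij_betw zz UNIV (range zz)" using zz_inj by (rule inj_on_imp_bij_betw)
  then have "(UNIV :: real set) \<approx> range zz" unfolding eqpoll_def by blast
  then show "range zz \<approx> (UNIV :: real set)" by (rule eqpoll_sym)
next
  fix n c z
  assume H: "nonconst_poly n c \<and> inj_on z {..<n} \<and> z ` {..<n} \<subseteq> range zz"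
  then have nc: "nonconst_poly n c" and zinj: "inj_on z {..<n}" and zr: "z ` {..<n} \<subseteq> range zz"
    by auto
  define t where "t i = (SOME u. z i = zz u)" for i
  have zt: "z i = zz (t i)" if "i < n" for i
  proof -
    have "\<exists>u. z i = zz u" using zr that by blast
    then show ?thesis unfolding t_def by (rule someI_ex)
  qed
  have tinj: "inj_on t {..<n}"
  proof (rule inj_onI)
    fix x y assume "x \<in> {..<n}" "y \<in> {..<n}" "t x = t y"
    then have "z x = z y" using zt[of x] zt[of y] by simp
    from inj_onD[OF zinj this] show "x = y" using \<open>x \<in> {..<n}\<close> \<open>y \<in> {..<n}\<close> by blast
  qed
  define F where "F = {\<alpha>. c \<alpha> \<noteq> 0}"
  have finF: "finite F" and supp: "\<And>\<alpha> i. \<alpha> \<in> F \<Longrightarrow> i \<ge> n \<Longrightarrow> \<alpha> i = 0"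
    and c0: "c (\<lambda>_. 0) = 0"
    using nc unfolding nonconst_poly_def F_def by auto
  define y where "y = poly_eval n c z"
  have yk: "y k = (\<Sum>\<alpha>\<in>F. c \<alpha> * (\<Prod>i<n. (zz (t i) k) ^ \<alpha> i))" for k
    unfolding y_def poly_eval_def F_def
    by (intro sum.cong refl arg_cong2[where f = "(*)"] prod.cong) (auto simp: zt)
  have yout: "y k = 0" if "\<not> (\<exists>j. inblk j k)" for k
  proof -
    have pz: "(\<Prod>i<n. (zz (t i) k) ^ \<alpha> i) = 0" if a: "\<alpha> \<in> F" for \<alpha>
    proof -
      have "\<alpha> \<noteq> (\<lambda>_. 0)" using a c0 unfolding F_def by auto
      then obtain i where i: "\<alpha> i \<noteq> 0" by auto
      then have "i < n" using supp[OF a, of i] by (meson not_le)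
      moreover have "(zz (t i) k) ^ \<alpha> i = 0" using i \<open>\<not> (\<exists>j. inblk j k)\<close> unfolding zz_def by simp
      ultimately show ?thesis by (intro prod_zero) auto
    qed
    show ?thesis unfolding yk by (rule sum.neutral) (simp add: pz)
  qed
  define Q where "Q j = (\<Sum>\<alpha>\<in>F. c \<alpha> * (\<Prod>i<n. (hval (t i) (from_nat j)) ^ \<alpha> i))" for j
  have yin: "y k = Q j" if "inblk j k" for j k
  proof -
    have "zz u k = hval u (from_nat j)" for u unfolding zz_def bj_eq[OF that] using that by auto
    then show ?thesis unfolding yk Q_def by simp
  qed
  define C where "C = (\<Sum>\<alpha>\<in>F. \<bar>c \<alpha>\<bar>)"
  have yb: "\<bar>y k\<bar> \<le> C" for k
  proof -
    have "\<bar>y k\<bar> \<le> (\<Sum>\<alpha>\<in>F. \<bar>c \<alpha> * (\<Prod>i<n. (zz (t i) k) ^ \<alpha> i)\<bar>)" unfolding yk by (rule sum_abs)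
    also have "\<dots> \<le> C" unfolding C_def
    proof (rule sum_mono)
      fix \<alpha> assume "\<alpha> \<in> F"
      have p0: "0 \<le> (\<Prod>i<n. (zz (t i) k) ^ \<alpha> i)" using zz_bnd by (intro prod_nonneg) auto
      have p1: "(\<Prod>i<n. (zz (t i) k) ^ \<alpha> i) \<le> 1" using zz_bnd by (intro prod_le_1) (auto intro: power_le_one)
      have "\<bar>c \<alpha> * (\<Prod>i<n. (zz (t i) k) ^ \<alpha> i)\<bar> = \<bar>c \<alpha>\<bar> * (\<Prod>i<n. (zz (t i) k) ^ \<alpha> i)"
        using p0 by (simp add: abs_mult)
      also have "\<dots> \<le> \<bar>c \<alpha>\<bar>" using p0 p1 by (simp add: mult_left_le)
      finally show "\<bar>c \<alpha> * (\<Prod>i<n. (zz (t i) k) ^ \<alpha> i)\<bar> \<le> \<bar>c \<alpha>\<bar>" .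
    qed
    finally show ?thesis .
  qed
  have yB: "Bseq y" by (rule BseqI'[of _ C]) (use yb in auto)
  then have ylinf: "y \<in> linf" unfolding linf_def by simp
  obtain s where V: "(\<Sum>\<alpha>\<in>F. c \<alpha> * (\<Prod>i<n. (1 / (real (s i) + 1)) ^ \<alpha> i)) \<noteq> 0"
    using kronecker[OF nc] unfolding F_def by blast
  define v where "v = (\<Sum>\<alpha>\<in>F. c \<alpha> * (\<Prod>i<n. (1 / (real (s i) + 1)) ^ \<alpha> i))"
  define J where "J = {j. \<forall>i<n. hval (t i) (from_nat j) = 1 / (real (s i) + 1)}"
  have QJ: "Q j = v" if "j \<in> J" for j
    using that unfolding Q_def v_def J_def by simp
  have infJ: "infinite (J - {0})" unfolding J_def by (rule infinite_remove[OF good_blocks[OF tinj]])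
  define e where "e = enumerate (J - {0})"
  have emono: "strict_mono e" unfolding e_def using infJ by (rule strict_mono_enumerate)
  have eJ: "e k \<in> J - {0}" for k unfolding e_def using infJ by (rule enumerate_in_set)
  have avg: "(\<Sum>i<e k. y (e k ^ 4 + i)) / real (e k) = v" for k
  proof -
    have "(\<Sum>i<e k. y (e k ^ 4 + i)) = (\<Sum>i<e k. v)"
    proof (rule sum.cong[OF refl])
      fix i assume "i \<in> {..<e k}"
      then have "inblk (e k) (e k ^ 4 + i)" by (intro inblk_start) simp
      then show "y (e k ^ 4 + i) = v" using yin QJ eJ[of k] by simp
    qed
    then show ?thesis using eJ[of k] by simp
  qed
  have "\<exists>L. banach_limit L \<and> L y = v"
  proof (rule banach_from_windows[OF yB, of e "\<lambda>k. e k ^ 4"])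
    show "\<And>k. 0 < e k" using eJ by auto
    show "filterlim e at_top sequentially" using emono by (rule filterlim_subseq)
    show "(\<lambda>k. (\<Sum>i<e k. y (e k ^ 4 + i)) / real (e k)) \<longlonglongrightarrow> v" unfolding avg by simp
  qed
  then obtain L2 where L2: "banach_limit L2" "L2 y = v" by blast
  have ces: "(\<lambda>N. (\<Sum>i<Suc N. y i) / real (Suc N)) \<longlonglongrightarrow> 0"
    by (rule cesaro_zero[OF yb yout])
  have "\<exists>L. banach_limit L \<and> L y = 0"
  proof (rule banach_from_windows[OF yB, of Suc "\<lambda>k. 0"])
    show "filterlim Suc at_top sequentially" by (rule filterlim_Suc)
    show "(\<lambda>k. (\<Sum>i<Suc k. y (0 + i)) / real (Suc k)) \<longlonglongrightarrow> 0" using ces by simp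
  qed simp
  then obtain L1 where L1: "banach_limit L1" "L1 y = 0" by blast
  have "y \<in> cesaro_S" unfolding cesaro_S_def using ylinf ces by (auto intro: convergentI)
  moreover have "y \<notin> c_hat"
  proof
    assume "y \<in> c_hat"
    then obtain s' where "\<And>L. banach_limit L \<Longrightarrow> L y = s'" unfolding c_hat_def by blast
    then have "v = 0" using L1 L2 by metis
    then show False using V unfolding v_def by simp
  qed
  moreover have "y \<noteq> (\<lambda>_. 0)"
  proof
    assume "y = (\<lambda>_. 0)"
    moreover have "y (e 0 ^ 4) = v" using yin[OF inblk_start[of 0 "e 0"]] QJ eJ[of 0] by auto
    ultimately show False using V unfolding v_def by simp
  qed
  ultimately show "poly_eval n c z \<in> cesaro_S - c_hat - {\<lambda>_. 0}" unfolding y_def by simp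
qed


end
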